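(* Consider an instance of $k$-robust Steiner forest on an undirected graph $G=(V,E)$ with edge costs $c$ and pair set $U\subseteq V\times V$, a threshold $T\ge0$, and constants $\beta,\gamma>0$ with $\gamma\le\beta/2$. Run the following procedure: start with $S_r=S_f=W=\emptyset$; while there is a pair $(s,t)\in U$ with $d_{G/(S_r\cup S_f)}(s,t)>\beta\frac{T}{k}$, add $(s,t)$ to $S_r$; then, if $d_G(s,w)<\gamma\frac{T}{k}$ for some $w\in W$, add $(s,w)$ to $S_f$ for such a $w$, else add $s$ to $W$; then, if $d_G(t,w')<\gamma\frac Tk$ for some $w'\in W$, add $(t,w')$ to $S_f$ for such a $w'$, else add $t$ to $W$. At termination, $|W|\ge|S_r|\ge|S_f|$.
   Context: $d_G$ is the shortest-path distance in $G$ under edge costs $c$. For a set of vertex pairs $S$, $G/S$ is the graph obtained by identifying the two vertices of each pair in $S$, and $d_{G/S}$ is its shortest-path distance. *)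

theory Defs
  imports "HOL-Library.Extended_Real"
begin

text \<open>The contraction G/S (identifying both vertices of each pair in S) is modelled by allowing
  zero-cost steps between the two vertices of any pair in S.\<close>

definition step_cost :: "'a set set \<Rightarrow> ('a set \<Rightarrow> real) \<Rightarrow> ('a \<times> 'a) set \<Rightarrow> 'a \<Rightarrow> 'a \<Rightarrow> ereal" where
  "step_cost E c S x y =
     (if (x, y) \<in> S \<or> (y, x) \<in> S then 0
      else if {x, y} \<in> E then ereal (c {x, y}) else \<infinity>)"

fun walk_cost :: "'a set set \<Rightarrow> ('a set \<Rightarrow> real) \<Rightarrow> ('a \<times> 'a) set \<Rightarrow> 'a list \<Rightarrow> ereal" where
  "walk_cost E c S [] = 0"
| "walk_cost E c S [x] = 0"
| "walk_cost E c S (x # y # xs) = step_cost E c S x y + walk_cost E c S (y # xs)"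

text \<open>Shortest-path distance d_{G/S}(u,v); infinite if no path. d_G = contr_dist E c {}.\<close>
definition contr_dist :: "'a set set \<Rightarrow> ('a set \<Rightarrow> real) \<Rightarrow> ('a \<times> 'a) set \<Rightarrow> 'a \<Rightarrow> 'a \<Rightarrow> ereal" where
  "contr_dist E c S u v = Inf {walk_cost E c S xs | xs. xs \<noteq> [] \<and> hd xs = u \<and> last xs = v}"

definition handle_terminal ::
  "'a set set \<Rightarrow> ('a set \<Rightarrow> real) \<Rightarrow> real \<Rightarrow> 'a \<Rightarrow>
   ('a \<times> 'a) set \<times> 'a set \<Rightarrow> ('a \<times> 'a) set \<times> 'a set \<Rightarrow> bool" where
  "handle_terminal E c r x st st' =
     (case st of (Sf, W) \<Rightarrow>
       (\<exists>w\<in>W. contr_dist E c {} x w < ereal r \<and> st' = (insert (x, w) Sf, W))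
       \<or> ((\<not> (\<exists>w\<in>W. contr_dist E c {} x w < ereal r)) \<and> st' = (Sf, insert x W)))"

text \<open>One iteration of the while loop; states are (S_r, S_f, W).
  Parameters: rho = beta*T/k (loop threshold), r = gamma*T/k.\<close>
definition loop_step ::
  "'a set set \<Rightarrow> ('a set \<Rightarrow> real) \<Rightarrow> ('a \<times> 'a) set \<Rightarrow> real \<Rightarrow> real \<Rightarrow>
   ('a \<times> 'a) set \<times> ('a \<times> 'a) set \<times> 'a set \<Rightarrow>
   ('a \<times> 'a) set \<times> ('a \<times> 'a) set \<times> 'a set \<Rightarrow> bool" where
  "loop_step E c U rho r st st' =
     (case st of (Sr, Sf, W) \<Rightarrow>
       (\<exists>s t Sf1 W1 Sf2 W2. (s, t) \<in> U \<and> contr_dist E c (Sr \<union> Sf) s t > ereal rho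
          \<and> handle_terminal E c r s (Sf, W) (Sf1, W1)
          \<and> handle_terminal E c r t (Sf1, W1) (Sf2, W2)
          \<and> st' = (insert (s, t) Sr, Sf2, W2)))"

definition loop_terminated ::
  "'a set set \<Rightarrow> ('a set \<Rightarrow> real) \<Rightarrow> ('a \<times> 'a) set \<Rightarrow> real \<Rightarrow>
   ('a \<times> 'a) set \<times> ('a \<times> 'a) set \<times> 'a set \<Rightarrow> bool" where
  "loop_terminated E c U rho st =
     (case st of (Sr, Sf, W) \<Rightarrow> \<not> (\<exists>(s, t)\<in>U. contr_dist E c (Sr \<union> Sf) s t > ereal rho))"

end

theory Submission
  imports Defs
begin

definition conn :: "('a \<times> 'a) set \<Rightarrow> ('a \<times> 'a) set" where
  "conn H = (H \<union> H\<inverse>)\<^sup>*"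

definition cls :: "('a \<times> 'a) set \<Rightarrow> 'a \<Rightarrow> 'a set" where
  "cls H x = conn H `` {x}"

lemma conn_refl: "(x, x) \<in> conn H"
  by (simp add: conn_def)

lemma conn_sym: "(x, y) \<in> conn H \<Longrightarrow> (y, x) \<in> conn H"
proof -
  assume "(x, y) \<in> conn H"
  hence "(y, x) \<in> ((H \<union> H\<inverse>)\<inverse>)\<^sup>*" unfolding conn_def by (simp add: rtrancl_converseI)
  moreover have "(H \<union> H\<inverse>)\<inverse> = H \<union> H\<inverse>" by auto
  ultimately show ?thesis unfolding conn_def by simp
qed

lemma conn_trans: "(x, y) \<in> conn H \<Longrightarrow> (y, z) \<in> conn H \<Longrightarrow> (x, z) \<in> conn H"
  unfolding conn_def by (rule rtrancl_trans)

lemma conn_mono: "H \<subseteq> H' \<Longrightarrow> (x, y) \<in> conn H \<Longrightarrow> (x, y) \<in> conn H'"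
proof -
  assume a: "H \<subseteq> H'" "(x, y) \<in> conn H"
  have "H \<union> H\<inverse> \<subseteq> H' \<union> H'\<inverse>" using a(1) by auto
  thus ?thesis using a(2) unfolding conn_def using rtrancl_mono by blast
qed

lemma conn_edge: "(a, b) \<in> H \<Longrightarrow> (a, b) \<in> conn H"
  unfolding conn_def by auto

lemma conn_edge': "(a, b) \<in> H \<Longrightarrow> (b, a) \<in> conn H"
  by (rule conn_sym, rule conn_edge)

lemma cls_eq:
  assumes xy: "(x, y) \<in> conn H" shows "cls H x = cls H y"
proof (rule set_eqI)
  fix z
  have yx: "(y, x) \<in> conn H" using xy by (rule conn_sym)
  show "z \<in> cls H x \<longleftrightarrow> z \<in> cls H y"
    unfolding cls_def Image_singleton_iff
    using conn_trans[OF xy, of z] conn_trans[OF yx, of z] by blast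
qed

lemma cls_eqD: "cls H x = cls H y \<Longrightarrow> (x, y) \<in> conn H"
proof -
  assume "cls H x = cls H y"
  moreover have "y \<in> cls H y" by (simp add: cls_def conn_refl)
  ultimately show ?thesis unfolding cls_def by blast
qed

lemma conn_unchanged:
  assumes sub: "H \<subseteq> H'" and new: "\<forall>(a, b)\<in>H' - H. (a, s) \<in> conn H'"
    and xs: "(x, s) \<notin> conn H'" and xy: "(x, y) \<in> conn H'"
  shows "(x, y) \<in> conn H"
proof -
  have "(x, y) \<in> (H' \<union> H'\<inverse>)\<^sup>*" using xy by (simp add: conn_def)
  thus ?thesis
  proof (induction rule: rtrancl_induct)
    case base
    then show ?case by (simp add: conn_refl)
  next
    case (step y z)
    have xy': "(x, y) \<in> conn H'" using step.hyps(1) by (simp add: conn_def)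
    show ?case
    proof (cases "(y, z) \<in> H \<union> H\<inverse>")
      case True
      then show ?thesis using step.IH unfolding conn_def by (rule rtrancl_into_rtrancl[rotated])
    next
      case False
      have "(y, z) \<in> H' \<union> H'\<inverse>" using step.hyps(2) .
      hence "(y, z) \<in> H' \<or> (z, y) \<in> H'" by simp
      moreover have "(y, z) \<notin> H" "(z, y) \<notin> H" using False by simp_all
      ultimately have "(y, z) \<in> H' - H \<or> (z, y) \<in> H' - H" by blast
      then show ?thesis
      proof
        assume "(y, z) \<in> H' - H"
        hence "(y, s) \<in> conn H'" using new by fast
        hence "(x, s) \<in> conn H'" using conn_trans[OF xy'] by simp
        thus ?thesis using xs by blast
      next
        assume zy: "(z, y) \<in> H' - H"
        hence zs: "(z, s) \<in> conn H'" using new by fast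
        have "(y, z) \<in> conn H'" using zy conn_edge'[of z y H'] by simp
        hence "(x, z) \<in> conn H'" using conn_trans[OF xy'] by simp
        hence "(x, s) \<in> conn H'" using conn_trans zs by metis
        thus ?thesis using xs by blast
      qed
    qed
  qed
qed

lemma K_bound:
  assumes sub: "H \<subseteq> H'" and new: "\<forall>(a, b)\<in>H' - H. (a, s) \<in> conn H'"
    and WW: "W \<subseteq> W'" and Wn: "\<forall>x\<in>W' - W. (x, s) \<in> conn H'" and fin: "finite W'"
    and P: "P \<subseteq> W" and Pc: "\<forall>x\<in>P. (x, s) \<in> conn H'"
  shows "card (cls H' ` W') + card (cls H ` P) \<le> card (cls H ` W) + 1"
proof -
  define A where "A = {x\<in>W. (x, s) \<in> conn H'}"
  have AW: "A \<subseteq> W" unfolding A_def by (rule Collect_restrict)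
  have finW: "finite W" using fin WW by (rule finite_subset[rotated])
  have finA: "finite A" using finW AW by (rule finite_subset[rotated])
  have img: "cls H' ` W' \<subseteq> insert (cls H' s) (cls H ` (W - A))"
  proof (rule subsetI)
    fix X assume "X \<in> cls H' ` W'"
    then obtain x where x: "x \<in> W'" "X = cls H' x" by (rule imageE) simp
    show "X \<in> insert (cls H' s) (cls H ` (W - A))"
    proof (cases "(x, s) \<in> conn H'")
      case True
      hence "cls H' x = cls H' s" by (rule cls_eq)
      then show ?thesis using x by simp
    next
      case False
      have xW: "x \<in> W"
      proof (rule ccontr)
        assume "x \<notin> W"
        hence "x \<in> W' - W" using x(1) by simp
        hence "(x, s) \<in> conn H'" using Wn by simp
        thus False using False by simp
      qed
      have xA: "x \<notin> A" using False by (simp add: A_def)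
      have "cls H' x = cls H x"
      proof (rule set_eqI)
        fix z
        show "z \<in> cls H' x \<longleftrightarrow> z \<in> cls H x"
          unfolding cls_def Image_singleton_iff
          using conn_unchanged[OF sub new False, of z] conn_mono[OF sub, of x z] by (rule iffI)
      qed
      hence "X = cls H x" using x(2) by simp
      moreover have "x \<in> W - A" using xW xA by simp
      ultimately show ?thesis by simp
    qed
  qed
  have c1: "card (cls H' ` W') \<le> card (cls H ` (W - A)) + 1"
  proof -
    have f: "finite (insert (cls H' s) (cls H ` (W - A)))" using finW by simp
    have "card (cls H' ` W') \<le> card (insert (cls H' s) (cls H ` (W - A)))"
      using card_mono[OF f img] .
    also have "\<dots> \<le> card (cls H ` (W - A)) + 1"
      using finW by (simp add: card_insert_if)
    finally show ?thesis .
  qed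
  have split: "cls H ` W = cls H ` (W - A) \<union> cls H ` A"
  proof -
    have "W = (W - A) \<union> A" using AW by auto
    hence "cls H ` W = cls H ` ((W - A) \<union> A)" by simp
    thus ?thesis by (simp only: image_Un)
  qed
  have disj: "cls H ` (W - A) \<inter> cls H ` A = {}"
  proof (rule ccontr)
    assume "cls H ` (W - A) \<inter> cls H ` A \<noteq> {}"
    then obtain X where "X \<in> cls H ` (W - A)" "X \<in> cls H ` A" by blast
    then obtain x y where xy: "x \<in> W - A" "y \<in> A" "cls H x = cls H y" by (metis imageE)
    have "(x, y) \<in> conn H" by (rule cls_eqD[OF xy(3)])
    hence "(x, y) \<in> conn H'" by (rule conn_mono[OF sub])
    moreover have "(y, s) \<in> conn H'" using xy(2) by (simp add: A_def)
    ultimately have "(x, s) \<in> conn H'" by (rule conn_trans)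
    moreover have "x \<in> W" "x \<notin> A" using xy(1) by simp_all
    ultimately show False by (simp add: A_def)
  qed
  have c2: "card (cls H ` W) = card (cls H ` (W - A)) + card (cls H ` A)"
    unfolding split using finW finA disj by (intro card_Un_disjoint) simp_all
  have PA: "P \<subseteq> A" using P Pc unfolding A_def by blast
  have c3: "card (cls H ` P) \<le> card (cls H ` A)"
    using finA PA by (intro card_mono) (simp_all add: image_mono)
  show ?thesis using c1 c2 c3 by linarith
qed

section \<open>Walks\<close>

lemma step_nonneg:
  assumes "\<forall>e\<in>E. c e \<ge> 0" shows "step_cost E c S x y \<ge> 0"
  using assms by (auto simp: step_cost_def)

lemma walk_nonneg:
  assumes "\<forall>e\<in>E. c e \<ge> 0" shows "walk_cost E c S xs \<ge> 0"
  using assms by (induction E c S xs rule: walk_cost.induct) (auto intro!: add_nonneg_nonneg step_nonneg)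

lemma step_mono:
  assumes "\<forall>e\<in>E. c e \<ge> 0" "S \<subseteq> S'" shows "step_cost E c S' x y \<le> step_cost E c S x y"
  using assms by (auto simp: step_cost_def)

lemma walk_mono:
  assumes "\<forall>e\<in>E. c e \<ge> 0" "S \<subseteq> S'" shows "walk_cost E c S' xs \<le> walk_cost E c S xs"
  using assms by (induction E c S' xs rule: walk_cost.induct) (auto intro!: add_mono step_mono)

lemma walk_append:
  "walk_cost E c S (xs @ y # ys) = walk_cost E c S (xs @ [y]) + walk_cost E c S (y # ys)"
proof (induction xs)
  case Nil
  then show ?case by simp
next
  case (Cons x xs)
  show ?case
  proof (cases xs)
    case Nil
    then show ?thesis by simp
  next
    case (Cons z zs)
    then show ?thesis using Cons.IH by (simp add: add.assoc)
  qed
qed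

lemma walk_join:
  assumes "p \<noteq> []" "q \<noteq> []" "last p = hd q"
  shows "walk_cost E c S (p @ tl q) = walk_cost E c S p + walk_cost E c S q"
    "hd (p @ tl q) = hd p" "last (p @ tl q) = last q" "p @ tl q \<noteq> []"
proof -
  obtain ps where p: "p = ps @ [last p]" using assms(1) append_butlast_last_id by metis
  obtain qs where q: "q = hd q # qs" using assms(2) list.collapse by metis
  have "p @ tl q = ps @ last p # qs" using p q by (metis append.assoc append_Cons append_Nil list.sel(3))
  then show "walk_cost E c S (p @ tl q) = walk_cost E c S p + walk_cost E c S q"
    using walk_append[of E c S ps "last p" qs] p q assms(3) by metis
  show "hd (p @ tl q) = hd p" using assms by simp
  show "last (p @ tl q) = last q"
  proof (cases "tl q = []")
    case True
    then show ?thesis using assms q by (metis append_Nil2 last_ConsL list.sel(3))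
  next
    case False
    then show ?thesis using assms by (simp add: last_tl)
  qed
  show "p @ tl q \<noteq> []" using assms by simp
qed

lemma step_sym: "step_cost E c S x y = step_cost E c S y x"
  by (auto simp: step_cost_def insert_commute)

lemma walk_rev: "walk_cost E c S (rev xs) = walk_cost E c S xs"
proof (induction E c S xs rule: walk_cost.induct)
  case (3 E c S x y xs)
  have "rev (x # y # xs) = rev xs @ y # [x]" by simp
  hence "walk_cost E c S (rev (x # y # xs)) = walk_cost E c S (rev (y # xs)) + walk_cost E c S [y, x]"
    using walk_append[of E c S "rev xs" y "[x]"] by simp
  then show ?case using 3 by (simp add: step_sym add.commute)
qed auto

lemma conn_walk:
  assumes "(x, y) \<in> conn S"
  shows "\<exists>p. p \<noteq> [] \<and> hd p = x \<and> last p = y \<and> walk_cost E c S p = 0"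
proof -
  have "(x, y) \<in> (S \<union> S\<inverse>)\<^sup>*" using assms by (simp add: conn_def)
  thus ?thesis
  proof (induction rule: rtrancl_induct)
    case base
    then show ?case by (intro exI[of _ "[x]"]) simp
  next
    case (step y z)
    then obtain p where p: "p \<noteq> []" "hd p = x" "last p = y" "walk_cost E c S p = 0" by blast
    have sz: "step_cost E c S y z = 0" using step.hyps(2) by (auto simp: step_cost_def)
    have j: "walk_cost E c S (p @ tl [y, z]) = walk_cost E c S p + walk_cost E c S [y, z]"
      "hd (p @ tl [y, z]) = hd p" "last (p @ tl [y, z]) = last [y, z]" "p @ tl [y, z] \<noteq> []"
      using walk_join(1)[where p=p and q="[y, z]" and E=E and c=c and S=S] walk_join(2-4)[where p=p and q="[y, z]"] p by auto
    show ?case using j p sz by (intro exI[of _ "p @ tl [y, z]"]) simp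
  qed
qed

lemma cd_le: "p \<noteq> [] \<Longrightarrow> hd p = u \<Longrightarrow> last p = v \<Longrightarrow> contr_dist E c S u v \<le> walk_cost E c S p"
  unfolding contr_dist_def by (rule Inf_lower) blast

lemma cd_lt: "contr_dist E c S u v < a \<Longrightarrow>
   \<exists>p. p \<noteq> [] \<and> hd p = u \<and> last p = v \<and> walk_cost E c S p < a"
  unfolding contr_dist_def by (auto simp: Inf_less_iff)

lemma cd_nonneg: "\<forall>e\<in>E. c e \<ge> 0 \<Longrightarrow> contr_dist E c S u v \<ge> 0"
  unfolding contr_dist_def by (rule Inf_greatest) (auto intro: walk_nonneg)

lemma cd_self: "contr_dist E c S x x \<le> 0"
  using cd_le[of "[x]" x x E c S] by simp

lemma ereal_two_lt:
  fixes a b :: ereal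
  assumes "0 \<le> a" "0 \<le> b" "a < ereal r" "b < ereal r"
  shows "a + b < ereal (2 * r)"
  using assms by (cases a; cases b) auto

lemma not_conn_st:
  assumes nn: "\<forall>e\<in>E. c e \<ge> 0" and r0: "0 \<le> rho" and d: "contr_dist E c S s t > ereal rho"
  shows "(s, t) \<notin> conn S"
proof
  assume "(s, t) \<in> conn S"
  then obtain p where p: "p \<noteq> []" "hd p = s" "last p = t" "walk_cost E c S p = 0"
    using conn_walk[of s t S E c] by blast
  have "contr_dist E c S s t \<le> walk_cost E c S p" by (rule cd_le[OF p(1-3)])
  hence "contr_dist E c S s t \<le> 0" using p(4) by simp
  moreover have "(0::ereal) \<le> ereal rho" using r0 by simp
  ultimately have "contr_dist E c S s t \<le> ereal rho" by (rule order.trans)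
  thus False using leD d by blast
qed

lemma not_close_ts:
  assumes nn: "\<forall>e\<in>E. c e \<ge> 0" and rr: "r \<le> rho" and d: "contr_dist E c S s t > ereal rho"
  shows "\<not> contr_dist E c {} t s < ereal r"
proof
  assume a: "contr_dist E c {} t s < ereal r"
  obtain p where p: "p \<noteq> []" "hd p = t" "last p = s" "walk_cost E c {} p < ereal r"
    using cd_lt[OF a] by blast
  have m: "walk_cost E c S (rev p) \<le> walk_cost E c {} p"
    using walk_mono[OF nn, of "{}" S p] walk_rev[of E c S p] by simp
  have rp: "rev p \<noteq> []" "hd (rev p) = s" "last (rev p) = t" using p by (simp_all add: hd_rev last_rev)
  have "contr_dist E c S s t \<le> walk_cost E c S (rev p)" by (rule cd_le[OF rp])
  also have "\<dots> \<le> walk_cost E c {} p" by (rule m)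
  also have "\<dots> < ereal r" by (rule p(4))
  also have "\<dots> \<le> ereal rho" using rr by simp
  finally have "contr_dist E c S s t < ereal rho" .
  thus False using d by simp
qed

lemma not_conn_ww:
  assumes nn: "\<forall>e\<in>E. c e \<ge> 0" and rr: "2 * r \<le> rho" and d: "contr_dist E c S s t > ereal rho"
    and d1: "contr_dist E c {} s w < ereal r" and d2: "contr_dist E c {} t w' < ereal r"
  shows "(w, w') \<notin> conn S"
proof
  assume "(w, w') \<in> conn S"
  then obtain q where q: "q \<noteq> []" "hd q = w" "last q = w'" "walk_cost E c S q = 0"
    using conn_walk[of w w' S E c] by blast
  obtain p1 where p1: "p1 \<noteq> []" "hd p1 = s" "last p1 = w" "walk_cost E c {} p1 < ereal r"
    using cd_lt[OF d1] by blast
  obtain p3 where p3: "p3 \<noteq> []" "hd p3 = t" "last p3 = w'" "walk_cost E c {} p3 < ereal r"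
    using cd_lt[OF d2] by blast
  define a where "a = p1 @ tl q"
  have ja: "walk_cost E c S a = walk_cost E c S p1 + walk_cost E c S q" "hd a = s" "last a = w'" "a \<noteq> []"
    using walk_join(1)[where p=p1 and q=q and E=E and c=c and S=S] walk_join(2-4)[where p=p1 and q=q] p1 q a_def by auto
  define b where "b = a @ tl (rev p3)"
  have jb: "walk_cost E c S b = walk_cost E c S a + walk_cost E c S (rev p3)" "hd b = s" "last b = t"
    using walk_join(1)[where p=a and q="rev p3" and E=E and c=c and S=S] walk_join(2-4)[where p=a and q="rev p3"] ja p3 b_def by (auto simp: hd_rev last_rev)
  have nb: "b \<noteq> []" using b_def ja by simp
  have m1: "walk_cost E c S p1 \<le> walk_cost E c {} p1" using walk_mono[OF nn, of "{}" S] by simp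
  have m3: "walk_cost E c S (rev p3) \<le> walk_cost E c {} p3"
    using walk_mono[OF nn, of "{}" S p3] walk_rev[of E c S p3] by simp
  have "walk_cost E c S b \<le> walk_cost E c {} p1 + walk_cost E c {} p3"
    using jb ja q m1 m3 by (simp add: add_mono)
  also have "\<dots> < ereal (2 * r)"
    using p1 p3 walk_nonneg[OF nn] by (intro ereal_two_lt) auto
  finally have "contr_dist E c S s t < ereal (2 * r)" using cd_le[OF nb jb(2,3)] by (rule le_less_trans[rotated])
  hence "contr_dist E c S s t < ereal rho" using rr by (meson ereal_less_eq(3) less_le_trans)
  thus False using d by simp
qed


section \<open>Invariant\<close>

definition Inv :: "('a \<times> 'a) set \<times> ('a \<times> 'a) set \<times> 'a set \<Rightarrow> bool" where
  "Inv st = (case st of (Sr, Sf, W) \<Rightarrow> finite Sr \<and> finite Sf \<and> finite W \<and>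
     card Sr + card (cls (Sr \<union> Sf) ` W) \<le> card W \<and>
     card Sf + card (cls (Sr \<union> Sf) ` W) \<le> card Sr)"

lemma newE_lemma:
  assumes "H' - H \<subseteq> {s, t} \<times> UNIV" "(t, s) \<in> conn H'"
  shows "\<forall>(a, b)\<in>H' - H. (a, s) \<in> conn H'"
proof (intro ballI, clarify)
  fix a b assume "(a, b) \<in> H'" "(a, b) \<notin> H"
  hence "a = s \<or> a = t" using assms(1) by blast
  thus "(a, s) \<in> conn H'" using assms(2) conn_refl by metis
qed

lemma ht_cases:
  assumes "handle_terminal E c r x (Sf, W) (Sf', W')"
  shows "(\<exists>w\<in>W. contr_dist E c {} x w < ereal r \<and> Sf' = insert (x, w) Sf \<and> W' = W)
     \<or> ((\<forall>w\<in>W. \<not> contr_dist E c {} x w < ereal r) \<and> Sf' = Sf \<and> W' = insert x W)"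
  using assms unfolding handle_terminal_def by auto

lemma Inv_step:
  assumes nn: "\<forall>e\<in>E. c e \<ge> 0" and r0: "0 \<le> r" and rr: "2 * r \<le> rho"
    and inv: "Inv (Sr, Sf, W)" and st: "loop_step E c U rho r (Sr, Sf, W) (Sr', Sf', W')"
  shows "Inv (Sr', Sf', W')"
proof -
  obtain s t Sf1 W1 Sf2 W2 where
    d: "contr_dist E c (Sr \<union> Sf) s t > ereal rho"
    and h1: "handle_terminal E c r s (Sf, W) (Sf1, W1)"
    and h2: "handle_terminal E c r t (Sf1, W1) (Sf2, W2)"
    and eq: "Sr' = insert (s, t) Sr" "Sf' = Sf2" "W' = W2"
    using st unfolding loop_step_def by auto
  define H where "H = Sr \<union> Sf"
  define H' where "H' = insert (s, t) Sr \<union> Sf2"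
  define K where "K = card (cls H ` W)"
  define K' where "K' = card (cls H' ` W2)"
  have rho0: "0 \<le> rho" using r0 rr by linarith
  have rle: "r \<le> rho" using r0 rr by linarith
  have fin: "finite Sr" "finite Sf" "finite W" and i1: "card Sr + K \<le> card W"
    and i2: "card Sf + K \<le> card Sr"
    using inv unfolding Inv_def K_def H_def by auto
  have dH: "contr_dist E c H s t > ereal rho" using d H_def by simp
  have nst: "(s, t) \<notin> conn H" by (rule not_conn_st[OF nn rho0 dH])
  have stSr: "(s, t) \<notin> Sr"
  proof
    assume "(s, t) \<in> Sr" hence "(s, t) \<in> H" by (simp add: H_def)
    hence "(s, t) \<in> conn H" by (rule conn_edge)
    thus False using nst by simp
  qed
  have sneq: "s \<noteq> t" using nst conn_refl[of s H] by metis
  have cSr: "card (insert (s, t) Sr) = card Sr + 1" using stSr fin by simp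
  have st_H': "(s, t) \<in> H'" by (simp add: H'_def)
  have ts: "(t, s) \<in> conn H'" by (rule conn_edge'[OF st_H'])
  have lowr: "0 < r" if "contr_dist E c {} x y < ereal r" for x y
  proof -
    have "(0::ereal) \<le> contr_dist E c {} x y" by (rule cd_nonneg[OF nn])
    hence "(0::ereal) < ereal r" using that by (rule le_less_trans)
    thus ?thesis by simp
  qed
  have notin: "x \<notin> W0" if "\<forall>w\<in>W0. \<not> contr_dist E c {} x w < ereal r" "0 < r" for x W0
  proof
    assume "x \<in> W0"
    hence "\<not> contr_dist E c {} x x < ereal r" using that(1) by simp
    moreover have "contr_dist E c {} x x < ereal r"
      using cd_self[of E c "{}" x] that(2) by (simp add: le_less_trans)
    ultimately show False by simp
  qed
  have goal: "Inv (Sr', Sf', W')" if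
    a1: "card Sr + 1 + K' \<le> card W2" and a2: "card Sf2 + K' \<le> card Sr + 1"
    and f: "finite Sf2" "finite W2"
  proof -
    have "Inv (insert (s, t) Sr, Sf2, W2)"
      unfolding Inv_def prod.case using a1 a2 f fin cSr unfolding K'_def H'_def by simp
    thus ?thesis using eq by simp
  qed
  from ht_cases[OF h1] show ?thesis
  proof (elim disjE exE conjE bexE)
    fix w assume w: "w \<in> W" "contr_dist E c {} s w < ereal r" and sf1: "Sf1 = insert (s, w) Sf"
      and w1: "W1 = W"
    have rpos: "0 < r" by (rule lowr[OF w(2)])
    from ht_cases[OF h2] show ?thesis
    proof (elim disjE exE conjE bexE)
      fix w' assume w': "w' \<in> W1" "contr_dist E c {} t w' < ereal r"
        and sf2: "Sf2 = insert (t, w') Sf1" and w2: "W2 = W1"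
      have w'W: "w' \<in> W" using w' w1 by simp
      have H'eq: "H' = insert (s, t) (insert (t, w') (insert (s, w) H))"
        unfolding H'_def H_def sf2 sf1 by auto
      have subH: "H \<subseteq> H'" unfolding H'eq by auto
      have newE: "\<forall>(a, b)\<in>H' - H. (a, s) \<in> conn H'"
        by (rule newE_lemma[OF _ ts]) (auto simp: H'eq)
      have nww: "(w, w') \<notin> conn H" by (rule not_conn_ww[OF nn rr dH w(2) w'(2)])
      have ws: "(w, s) \<in> conn H'" by (rule conn_edge') (simp add: H'eq)
      have w't: "(w', t) \<in> conn H'" by (rule conn_edge') (simp add: H'eq)
      have w's: "(w', s) \<in> conn H'" using conn_trans[OF w't ts] .
      have kb: "K' + card (cls H ` {w, w'}) \<le> K + 1"
        unfolding K_def K'_def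
        by (rule K_bound[OF subH newE]) (use w2 w1 fin w'W w ws w's in auto)
      have wne: "cls H w \<noteq> cls H w'" using nww cls_eqD by metis
      have "card (cls H ` {w, w'}) = 2" using wne by simp
      hence kb2: "K' + 1 \<le> K" using kb by linarith
      have cf: "card Sf2 \<le> card Sf + 2"
        using fin unfolding sf2 sf1 by (simp add: card_insert_if)
      show ?thesis
        by (rule goal) (use i1 i2 kb2 cf w2 w1 fin sf2 sf1 in auto)
    next
      assume nf: "\<forall>w'\<in>W1. \<not> contr_dist E c {} t w' < ereal r"
        and sf2: "Sf2 = Sf1" and w2: "W2 = insert t W1"
      have tW: "t \<notin> W" using notin[OF nf rpos] w1 by simp
      have H'eq: "H' = insert (s, t) (insert (s, w) H)"
        unfolding H'_def H_def sf2 sf1 by auto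
      have subH: "H \<subseteq> H'" unfolding H'eq by auto
      have newE: "\<forall>(a, b)\<in>H' - H. (a, s) \<in> conn H'"
        by (rule newE_lemma[OF _ ts]) (auto simp: H'eq)
      have ws: "(w, s) \<in> conn H'" by (rule conn_edge') (simp add: H'eq)
      have kb: "K' + card (cls H ` {w}) \<le> K + 1"
        unfolding K_def K'_def
        by (rule K_bound[OF subH newE]) (use w2 w1 fin w ws ts in auto)
      hence kb2: "K' \<le> K" by simp
      have cf: "card Sf2 \<le> card Sf + 1" using fin unfolding sf2 sf1 by (simp add: card_insert_if)
      have cW: "card W2 = card W + 1" using tW fin unfolding w2 w1 by simp
      show ?thesis
        by (rule goal) (use i1 i2 kb2 cf cW w2 w1 fin sf2 sf1 in auto)
    qed
  next
    assume nf1: "\<forall>w\<in>W. \<not> contr_dist E c {} s w < ereal r"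
      and sf1: "Sf1 = Sf" and w1: "W1 = insert s W"
    from ht_cases[OF h2] show ?thesis
    proof (elim disjE exE conjE bexE)
      fix w' assume w': "w' \<in> W1" "contr_dist E c {} t w' < ereal r"
        and sf2: "Sf2 = insert (t, w') Sf1" and w2: "W2 = W1"
      have rpos: "0 < r" by (rule lowr[OF w'(2)])
      have sW: "s \<notin> W" by (rule notin[OF nf1 rpos])
      have "w' \<noteq> s" using not_close_ts[OF nn rle dH] w'(2) by blast
      hence w'W: "w' \<in> W" using w' w1 by simp
      have H'eq: "H' = insert (s, t) (insert (t, w') H)"
        unfolding H'_def H_def sf2 sf1 by auto
      have subH: "H \<subseteq> H'" unfolding H'eq by auto
      have newE: "\<forall>(a, b)\<in>H' - H. (a, s) \<in> conn H'"
        by (rule newE_lemma[OF _ ts]) (auto simp: H'eq)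
      have w't: "(w', t) \<in> conn H'" by (rule conn_edge') (simp add: H'eq)
      have w's: "(w', s) \<in> conn H'" using conn_trans[OF w't ts] .
      have kb: "K' + card (cls H ` {w'}) \<le> K + 1"
        unfolding K_def K'_def
        by (rule K_bound[OF subH newE]) (use w2 w1 fin w'W w's conn_refl in auto)
      hence kb2: "K' \<le> K" by simp
      have cf: "card Sf2 \<le> card Sf + 1" using fin unfolding sf2 sf1 by (simp add: card_insert_if)
      have cW: "card W2 = card W + 1" using sW fin unfolding w2 w1 by simp
      show ?thesis
        by (rule goal) (use i1 i2 kb2 cf cW w2 w1 fin sf2 sf1 in auto)
    next
      assume sf2: "Sf2 = Sf1" and w2: "W2 = insert t W1"
      define P where "P = W \<inter> {s, t}"
      have H'eq: "H' = insert (s, t) H"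
        unfolding H'_def H_def sf2 sf1 by auto
      have subH: "H \<subseteq> H'" unfolding H'eq by auto
      have newE: "\<forall>(a, b)\<in>H' - H. (a, s) \<in> conn H'"
        by (rule newE_lemma[OF _ ts]) (auto simp: H'eq)
      have kb: "K' + card (cls H ` P) \<le> K + 1"
        unfolding K_def K'_def
        by (rule K_bound[OF subH newE]) (use w2 w1 fin ts conn_refl in \<open>auto simp: P_def\<close>)
      have inj: "inj_on (cls H) P"
      proof (rule inj_onI)
        fix x y assume xy: "x \<in> P" "y \<in> P" "cls H x = cls H y"
        have c: "(x, y) \<in> conn H" by (rule cls_eqD[OF xy(3)])
        show "x = y"
        proof (rule ccontr)
          assume "x \<noteq> y"
          hence "(x = s \<and> y = t) \<or> (x = t \<and> y = s)" using xy(1,2) unfolding P_def by auto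
          thus False using c nst conn_sym by metis
        qed
      qed
      have cP: "card (cls H ` P) = card P" using card_image[OF inj] .
      have "card (W \<union> {s, t}) + card (W \<inter> {s, t}) = card W + card {s, t}"
        using card_Un_Int[of W "{s, t}"] fin by simp
      moreover have "W2 = W \<union> {s, t}" unfolding w2 w1 by auto
      ultimately have cW: "card W2 + card P = card W + 2" using sneq unfolding P_def by simp
      show ?thesis
        by (rule goal) (use i1 i2 kb cP cW w2 w1 fin sf2 sf1 in auto)
    qed
  qed
qed

theorem mainTheorem15:
  fixes V :: "'a set" and E :: "'a set set" and c :: "'a set \<Rightarrow> real"
    and U :: "('a \<times> 'a) set" and k :: nat and T \<beta> \<gamma> :: real
    and Sr Sf :: "('a \<times> 'a) set" and W :: "'a set"
  assumes "finite V"
    and "\<forall>e\<in>E. e \<subseteq> V \<and> card e = 2"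
    and "\<forall>e\<in>E. c e \<ge> 0"
    and "U \<subseteq> V \<times> V"
    and "k > 0"
    and "T \<ge> 0" and "\<beta> > 0" and "\<gamma> > 0" and "\<gamma> \<le> \<beta> / 2"
    and "(loop_step E c U (\<beta> * T / real k) (\<gamma> * T / real k))\<^sup>*\<^sup>* ({}, {}, {}) (Sr, Sf, W)"
    and "loop_terminated E c U (\<beta> * T / real k) (Sr, Sf, W)"
  shows "card W \<ge> card Sr \<and> card Sr \<ge> card Sf"
proof -
  define r where "r = \<gamma> * T / real k"
  define rho where "rho = \<beta> * T / real k"
  have kpos: "real k > 0" using assms(5) by simp
  have r0: "0 \<le> r" unfolding r_def using assms(6,8) kpos by simp
  have "2 * \<gamma> * T \<le> \<beta> * T" using assms(6,9) by (intro mult_right_mono) auto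
  hence rr: "2 * r \<le> rho" unfolding r_def rho_def using kpos
    by (simp add: divide_right_mono mult.assoc)
  have nn: "\<forall>e\<in>E. c e \<ge> 0" using assms(3) .
  have "Inv (Sr, Sf, W)"
    using assms(10)[folded r_def rho_def]
  proof (induction rule: rtranclp_induct)
    case base
    then show ?case by (simp add: Inv_def)
  next
    case (step y z)
    obtain a b d where y: "y = (a, b, d)" by (cases y) auto
    obtain a' b' d' where z: "z = (a', b', d')" by (cases z) auto
    show ?case using Inv_step[OF nn r0 rr] step y z by blast
  qed
  thus ?thesis unfolding Inv_def by auto
qed

end
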